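(* Let $G$ be a $\mathrm{sat}(n,K_{2,3})$-graph with $\delta(G) = 3$ such that for every vertex $\alpha$ of degree $3$, the three neighbors of $\alpha$ are pairwise adjacent (i.e., $\lambda(G) = 3$). Then $e(G) \geq 2n-2$.
   Context: All graphs are finite and simple. A graph $G$ is $K_{2,3}$-saturated if $G$ contains no subgraph isomorphic to $K_{2,3}$, but for every pair of nonadjacent vertices $u,v$, the graph $G+uv$ contains a subgraph isomorphic to $K_{2,3}$. $\mathrm{sat}(n,K_{2,3})$ is the minimum number of edges of a $K_{2,3}$-saturated graph on $n$ vertices, and a $\mathrm{sat}(n,K_{2,3})$-graph is a $K_{2,3}$-saturated graph on $n$ vertices with exactly $\mathrm{sat}(n,K_{2,3})$ edges. $e(G)$ is the number of edges and $\delta(G)$ the minimum degree of $G$. $\lambda(G) = \min\{e(G[N(\alpha)]) : d(\alpha) = 3\}$, the minimum number of edges induced by the neighborhood of a degree-$3$ vertex. *)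

theory Defs
  imports Main
begin

definition simple_graph :: "'a set \<Rightarrow> 'a set set \<Rightarrow> bool" where
  "simple_graph V E \<longleftrightarrow> finite V \<and> (\<forall>e\<in>E. e \<subseteq> V \<and> card e = 2)"

definition neighbors :: "'a set set \<Rightarrow> 'a \<Rightarrow> 'a set" where
  "neighbors E v = {u. {u, v} \<in> E}"

definition degree :: "'a set set \<Rightarrow> 'a \<Rightarrow> nat" where
  "degree E v = card (neighbors E v)"

definition min_degree :: "'a set \<Rightarrow> 'a set set \<Rightarrow> nat" where
  "min_degree V E = Min (degree E ` V)"

definition has_K23 :: "'a set \<Rightarrow> 'a set set \<Rightarrow> bool" where
  "has_K23 V E \<longleftrightarrow> (\<exists>a1 a2 b1 b2 b3.
      distinct [a1, a2, b1, b2, b3] \<and> {a1, a2, b1, b2, b3} \<subseteq> V \<and>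
      (\<forall>a\<in>{a1, a2}. \<forall>b\<in>{b1, b2, b3}. {a, b} \<in> E))"

definition K23_saturated :: "'a set \<Rightarrow> 'a set set \<Rightarrow> bool" where
  "K23_saturated V E \<longleftrightarrow> simple_graph V E \<and> \<not> has_K23 V E \<and>
     (\<forall>u\<in>V. \<forall>v\<in>V. u \<noteq> v \<longrightarrow> {u, v} \<notin> E \<longrightarrow> has_K23 V (insert {u, v} E))"

(* sat(n, K_{2,3}): minimum number of edges of a K_{2,3}-saturated graph on n vertices
   (vertex set taken to be {0..<n}; the notion is invariant under relabelling). *)
definition sat_K23 :: "nat \<Rightarrow> nat" where
  "sat_K23 n = Inf {card E | E :: nat set set. K23_saturated {0..<n} E}"

end

theory Submission
  imports Defs
begin

lemma K23I:
  assumes "distinct [a1,a2,b1,b2,b3]" "{a1,a2,b1,b2,b3} \<subseteq> V"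
    "{a1,b1}\<in>E" "{a1,b2}\<in>E" "{a1,b3}\<in>E" "{a2,b1}\<in>E" "{a2,b2}\<in>E" "{a2,b3}\<in>E"
  shows "has_K23 V E"
  unfolding has_K23_def
  apply (rule exI[of _ a1], rule exI[of _ a2], rule exI[of _ b1], rule exI[of _ b2], rule exI[of _ b3])
  using assms by auto

lemma edge_facts:
  assumes "simple_graph V E" "{u,v} \<in> E"
  shows "u \<noteq> v" "u \<in> V" "v \<in> V"
proof -
  have "card {u,v} = 2" "{u,v} \<subseteq> V" using assms unfolding simple_graph_def by auto
  then show "u \<noteq> v" "u \<in> V" "v \<in> V" by (auto split: if_splits)
qed

lemma core:
  assumes sg: "simple_graph V E" and nk: "\<not> has_K23 V E"
    and lam: "\<forall>\<alpha>\<in>V. degree E \<alpha> = 3 \<longrightarrow>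
           (\<forall>x\<in>neighbors E \<alpha>. \<forall>y\<in>neighbors E \<alpha>. x \<noteq> y \<longrightarrow> {x, y} \<in> E)"
    and al: "\<alpha> \<in> V" "degree E \<alpha> = 3" "neighbors E \<alpha> = {x,y,z}"
    and uV: "u \<in> V" and ux: "{x,u} \<notin> E" "{y,u} \<notin> E" "{z,u} \<notin> E"
    and du: "degree E u = 3"
    and dist: "distinct [a,a',b,b',b'']"
    and ab: "{a,b} = {\<alpha>,u}"
    and ed: "\<forall>p\<in>{a,a'}. \<forall>q\<in>{b,b',b''}. {p,q} \<in> insert {\<alpha>,u} E"
  shows False
proof -
  have NE: "w \<in> neighbors E v \<longleftrightarrow> {v,w} \<in> E" for v w
    unfolding neighbors_def by (simp add: insert_commute)
  have sym: "{v,w} \<in> E \<longleftrightarrow> {w,v} \<in> E" for v w by (simp add: insert_commute)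
  have alnot: "\<alpha> \<notin> {x,y,z}"
    using edge_facts(1)[OF sg] NE al(3) by blast
  have xyzV: "x \<in> V" "y \<in> V" "z \<in> V"
    using edge_facts(3)[OF sg] NE al(3) by blast+
  have xyzd: "x \<noteq> y" "y \<noteq> z" "x \<noteq> z"
    using al(2,3) unfolding degree_def by (auto simp: card_insert_if split: if_splits)
  have tri: "\<And>p q. p \<in> {x,y,z} \<Longrightarrow> q \<in> {x,y,z} \<Longrightarrow> p \<noteq> q \<Longrightarrow> {p,q} \<in> E"
    using lam al by blast
  consider "a = \<alpha>" "b = u" | "a = u" "b = \<alpha>" using ab dist by (auto simp: doubleton_eq_iff)
  then show False
  proof cases
    case 1
    have e1: "{\<alpha>,b'} \<in> E" "{\<alpha>,b''} \<in> E" "{a',u} \<in> E" "{a',b'} \<in> E" "{a',b''} \<in> E"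
      using ed dist 1 by (auto simp: doubleton_eq_iff)
    have bb: "b' \<in> {x,y,z}" "b'' \<in> {x,y,z}" using e1 NE al(3) by blast+
    have a'n: "a' \<notin> {x,y,z}"
    proof
      assume "a' \<in> {x,y,z}" then show False using e1(3) ux by auto
    qed
    obtain w where w: "w \<in> {x,y,z}" "w \<noteq> b'" "w \<noteq> b''"
      using bb dist xyzd by auto
    have "has_K23 V E"
    proof (rule K23I[of b' b'' \<alpha> a' w])
      show "distinct [b', b'', \<alpha>, a', w]" using dist 1 w a'n alnot bb by auto
      show "{b', b'', \<alpha>, a', w} \<subseteq> V" using xyzV bb w al(1) edge_facts(2)[OF sg e1(3)] by auto
      show "{b', \<alpha>} \<in> E" "{b'', \<alpha>} \<in> E" using e1 sym by blast+
      show "{b', a'} \<in> E" "{b'', a'} \<in> E" using e1 sym by blast+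
      show "{b', w} \<in> E" "{b'', w} \<in> E" using tri bb w by auto
    qed
    then show False using nk by simp
  next
    case 2
    have e1: "{a',\<alpha>} \<in> E" "{u,b'} \<in> E" "{u,b''} \<in> E" "{a',b'} \<in> E" "{a',b''} \<in> E"
      using ed dist 2 by (auto simp: doubleton_eq_iff)
    have a'x: "a' \<in> {x,y,z}" using e1 NE al(3) sym by blast
    have bn: "b' \<in> neighbors E u" "b'' \<in> neighbors E u" using e1 NE by blast+
    have fin: "finite (neighbors E u)" 
    proof (rule finite_subset)
      show "neighbors E u \<subseteq> V" using edge_facts(3)[OF sg] NE by blast
      show "finite V" using sg unfolding simple_graph_def by simp
    qed
    obtain t where t: "t \<in> neighbors E u" "t \<noteq> b'" "t \<noteq> b''"
    proof -
      have "neighbors E u \<noteq> {b',b''}"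
      proof
        assume "neighbors E u = {b',b''}"
        hence "card (neighbors E u) = 2" using dist by simp
        thus False using du unfolding degree_def by simp
      qed
      moreover have "{b',b''} \<subseteq> neighbors E u" using bn by auto
      ultimately show ?thesis using that by blast
    qed
    have trU: "\<And>p q. p \<in> neighbors E u \<Longrightarrow> q \<in> neighbors E u \<Longrightarrow> p \<noteq> q \<Longrightarrow> {p,q} \<in> E"
      using lam du uV by blast
    have ut: "{u,t} \<in> E" using t NE by blast
    have "has_K23 V E"
    proof (rule K23I[of b' b'' a' u t])
      show "distinct [b', b'', a', u, t]" using dist 2 t a'x ux edge_facts(1)[OF sg ut] ut sym by auto
      show "{b', b'', a', u, t} \<subseteq> V" using edge_facts(2,3)[OF sg] e1 ut by blast
      show "{b', a'} \<in> E" "{b'', a'} \<in> E" using e1 sym by blast+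
      show "{b', u} \<in> E" "{b'', u} \<in> E" using e1 sym by blast+
      show "{b', t} \<in> E" "{b'', t} \<in> E" using trU bn t dist by auto
    qed
    then show False using nk by simp
  qed
qed


lemma handshake:
  assumes sg: "simple_graph V E"
  shows "(\<Sum>v\<in>V. degree E v) = 2 * card E"
proof -
  have finV: "finite V" using sg unfolding simple_graph_def by simp
  have EP: "E \<subseteq> Pow V" using sg unfolding simple_graph_def by auto
  have finE: "finite E" using finite_subset[OF EP] finV by simp
  have d: "degree E v = card {e\<in>E. v\<in>e}" for v
  proof -
    have "bij_betw (\<lambda>u. {u,v}) (neighbors E v) {e\<in>E. v\<in>e}"
    proof (rule bij_betwI')
      fix a b assume "a \<in> neighbors E v" "b \<in> neighbors E v"
      then have "{a,v}\<in>E" "{b,v}\<in>E" unfolding neighbors_def by auto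
      then have "a \<noteq> v" "b \<noteq> v" using edge_facts(1)[OF sg] by blast+
      then show "({a, v} = {b, v}) = (a = b)" by (auto simp: doubleton_eq_iff)
    next
      fix a assume "a \<in> neighbors E v" then show "{a,v} \<in> {e\<in>E. v\<in>e}" unfolding neighbors_def by auto
    next
      fix e assume e: "e \<in> {e\<in>E. v\<in>e}"
      then have "card e = 2" using sg unfolding simple_graph_def by auto
      then obtain p q where pq: "e = {p,q}" "p \<noteq> q" by (auto simp: card_2_iff)
      show "\<exists>a\<in>neighbors E v. e = {a, v}"
      proof (cases "v = p")
        case True then show ?thesis using e pq unfolding neighbors_def by (auto simp: insert_commute)
      next
        case False then have "v = q" using e pq by auto
        then show ?thesis using e pq unfolding neighbors_def by auto
      qed
    qed
    then show ?thesis unfolding degree_def by (rule bij_betw_same_card)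
  qed
  have "(\<Sum>v\<in>V. degree E v) = (\<Sum>v\<in>V. \<Sum>e\<in>E. if v \<in> e then 1 else 0)"
    by (simp add: d sum.inter_filter[OF finE, symmetric])
  also have "\<dots> = (\<Sum>e\<in>E. \<Sum>v\<in>V. if v \<in> e then 1 else 0)" by (rule sum.swap)
  also have "\<dots> = (\<Sum>e\<in>E. card {v\<in>V. v \<in> e})"
    by (simp add: sum.inter_filter[OF finV, symmetric])
  also have "\<dots> = (\<Sum>e\<in>E. 2)"
  proof (rule sum.cong)
    fix e assume "e \<in> E"
    then have "card e = 2" "e \<subseteq> V" using sg unfolding simple_graph_def by auto
    moreover have "{v\<in>V. v \<in> e} = e" using calculation by auto
    ultimately show "card {v\<in>V. v \<in> e} = 2" by simp
  qed simp
  finally show ?thesis by simp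
qed


theorem lemma6p1:
  fixes V :: "'a set" and E :: "'a set set" and n :: nat
  assumes "K23_saturated V E"
    and "card V = n"
    and "card E = sat_K23 n"
    and "min_degree V E = 3"
    and "\<forall>\<alpha>\<in>V. degree E \<alpha> = 3 \<longrightarrow>
           (\<forall>x\<in>neighbors E \<alpha>. \<forall>y\<in>neighbors E \<alpha>. x \<noteq> y \<longrightarrow> {x, y} \<in> E)"
  shows "card E \<ge> 2 * n - 2"
proof (cases "V = {}")
  case True then show ?thesis using assms(2) by simp
next
  case False
  note lam = assms(5)
  have sg: "simple_graph V E" and nk: "\<not> has_K23 V E"
    and sat: "\<forall>u\<in>V. \<forall>v\<in>V. u \<noteq> v \<longrightarrow> {u, v} \<notin> E \<longrightarrow> has_K23 V (insert {u, v} E)"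
    using assms(1) unfolding K23_saturated_def by auto
  have finV: "finite V" using sg unfolding simple_graph_def by simp
  have NE: "w \<in> neighbors E v \<longleftrightarrow> {v,w} \<in> E" for v w
    unfolding neighbors_def by (simp add: insert_commute)
  have sym: "{v,w} \<in> E \<longleftrightarrow> {w,v} \<in> E" for v w by (simp add: insert_commute)
  have NV: "neighbors E v \<subseteq> V" for v using edge_facts(3)[OF sg] NE by blast
  have mind: "degree E v \<ge> 3" if "v \<in> V" for v
    using assms(4) that finV unfolding min_degree_def by (metis Min_le finite_imageI imageI)
  obtain \<alpha> where al: "\<alpha> \<in> V" "degree E \<alpha> = 3"
    using assms(4) finV False unfolding min_degree_def
    by (metis (mono_tags, lifting) Min_in finite_imageI image_iff image_is_empty)
  obtain x y z where xyz: "neighbors E \<alpha> = {x,y,z}" "x \<noteq> y" "y \<noteq> z" "x \<noteq> z"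
    using al(2) unfolding degree_def by (auto simp: card_3_iff)
  have alnot: "\<alpha> \<notin> {x,y,z}"
    using edge_facts(1)[OF sg] NE xyz(1) by blast
  have xyzV: "x \<in> V" "y \<in> V" "z \<in> V" using NV xyz(1) by blast+
  have tri: "\<And>p q. p \<in> {x,y,z} \<Longrightarrow> q \<in> {x,y,z} \<Longrightarrow> p \<noteq> q \<Longrightarrow> {p,q} \<in> E"
    using lam al xyz by blast
  define Q where "Q = {\<alpha>,x,y,z}"
  define R where "R = V - Q"
  have QV: "Q \<subseteq> V" using al xyzV Q_def by auto
  have cQ: "card Q = 4" using xyz alnot Q_def by auto
  have cR: "card R = n - 4" using R_def QV cQ assms(2) finV by (simp add: card_Diff_subset finite_subset)
  have finR: "finite R" using R_def finV by simp
  have dx: "degree E v \<ge> 3 + card (neighbors E v \<inter> R)" if v: "v \<in> {x,y,z}" for v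
  proof -
    have "neighbors E v = (neighbors E v \<inter> Q) \<union> (neighbors E v \<inter> R)" using NV R_def by auto
    moreover have "finite (neighbors E v)" using NV finV finite_subset by blast
    ultimately have "card (neighbors E v) = card (neighbors E v \<inter> Q) + card (neighbors E v \<inter> R)"
      by (metis (no_types, lifting) Diff_disjoint R_def card_Un_disjoint finite_Int inf_commute inf_left_commute inf.idem)
    moreover have sub: "Q - {v} \<subseteq> neighbors E v \<inter> Q"
    proof
      fix q assume q: "q \<in> Q - {v}"
      show "q \<in> neighbors E v \<inter> Q"
      proof (cases "q = \<alpha>")
        case True then show ?thesis using v xyz(1) NE sym Q_def by auto
      next
        case False then have "q \<in> {x,y,z}" using q Q_def by auto
        then show ?thesis using tri[of v q] v q NE Q_def by auto
      qed
    qed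
    moreover have "card (Q - {v}) = 3" using cQ v Q_def by simp
    moreover have "card (Q - {v}) \<le> card (neighbors E v \<inter> Q)"
      by (rule card_mono[OF _ sub]) (simp add: Q_def)
    ultimately show ?thesis unfolding degree_def by linarith
  qed
  have cnt: "card (neighbors E v \<inter> S) = (\<Sum>w\<in>S. if {v,w} \<in> E then 1 else 0)" if "finite S" for v S
  proof -
    have "neighbors E v \<inter> S = {w\<in>S. {v,w} \<in> E}" using NE by auto
    then show ?thesis using sum.inter_filter[OF that, of "\<lambda>_. 1::nat"] by simp
  qed
  have dc: "(\<Sum>v\<in>{x,y,z}. card (neighbors E v \<inter> R)) = (\<Sum>w\<in>R. card (neighbors E w \<inter> {x,y,z}))"
  proof -
    have "(\<Sum>v\<in>{x,y,z}. card (neighbors E v \<inter> R)) = (\<Sum>v\<in>{x,y,z}. \<Sum>w\<in>R. if {v,w} \<in> E then 1 else 0)"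
      using cnt finR by simp
    also have "\<dots> = (\<Sum>w\<in>R. \<Sum>v\<in>{x,y,z}. if {v,w} \<in> E then 1 else 0)" by (rule sum.swap)
    also have "\<dots> = (\<Sum>w\<in>R. \<Sum>v\<in>{x,y,z}. if {w,v} \<in> E then 1 else 0)" by (simp add: insert_commute)
    also have "\<dots> = (\<Sum>w\<in>R. card (neighbors E w \<inter> {x,y,z}))"
      using cnt[of "{x,y,z}"] by simp
    finally show ?thesis .
  qed
  have dR: "degree E w + card (neighbors E w \<inter> {x,y,z}) \<ge> 4" if w: "w \<in> R" for w
  proof (cases "neighbors E w \<inter> {x,y,z} = {}")
    case False
    then have "card (neighbors E w \<inter> {x,y,z}) \<ge> 1" by (simp add: Suc_leI card_gt_0_iff)
    moreover have "degree E w \<ge> 3" using mind w R_def by auto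
    ultimately show ?thesis by linarith
  next
    case True
    have wV: "w \<in> V" and wQ: "w \<notin> Q" using w R_def by auto
    have ux: "{x,w} \<notin> E" "{y,w} \<notin> E" "{z,w} \<notin> E" using True NE sym by auto
    have "degree E w \<noteq> 3"
    proof
      assume du: "degree E w = 3"
      have key: "\<And>a a' b b' b''. distinct [a,a',b,b',b''] \<Longrightarrow> {a,b} = {\<alpha>,w} \<Longrightarrow>
         \<forall>p\<in>{a,a'}. \<forall>q\<in>{b,b',b''}. {p,q} \<in> insert {\<alpha>,w} E \<Longrightarrow> False"
        by (rule core[OF sg nk lam al xyz(1) wV ux du]; assumption)
      have "w \<noteq> \<alpha>" "{\<alpha>,w} \<notin> E" using wQ Q_def xyz(1) NE by auto
      then have "has_K23 V (insert {\<alpha>,w} E)" using sat[rule_format, OF al(1) wV] by metis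
      then have "\<exists>a1 a2 b1 b2 b3. distinct [a1, a2, b1, b2, b3] \<and> {a1, a2, b1, b2, b3} \<subseteq> V \<and>
        (\<forall>a\<in>{a1, a2}. \<forall>b\<in>{b1, b2, b3}. {a, b} \<in> insert {\<alpha>,w} E)"
        unfolding has_K23_def .
      then obtain a1 a2 b1 b2 b3 where K0: "distinct [a1, a2, b1, b2, b3] \<and> {a1, a2, b1, b2, b3} \<subseteq> V \<and>
        (\<forall>a\<in>{a1, a2}. \<forall>b\<in>{b1, b2, b3}. {a, b} \<in> insert {\<alpha>,w} E)" by (elim exE) (rule that)
      note K = K0[THEN conjunct1] K0[THEN conjunct2, THEN conjunct1] K0[THEN conjunct2, THEN conjunct2]
      have "\<exists>a\<in>{a1,a2}. \<exists>b\<in>{b1,b2,b3}. {a,b} \<notin> E"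
      proof (rule ccontr)
        assume "\<not> ?thesis"
        then have "has_K23 V E" using K(1,2) by (intro K23I) auto
        then show False using nk by simp
      qed
      then obtain a b where ab: "a \<in> {a1,a2}" "b \<in> {b1,b2,b3}" "{a,b} \<notin> E" by blast
      then have abe: "{a,b} = {\<alpha>,w}" using K(3) by blast
      show False
      proof -
        consider "a = a1" "b = b1" | "a = a1" "b = b2" | "a = a1" "b = b3"
          | "a = a2" "b = b1" | "a = a2" "b = b2" | "a = a2" "b = b3" using ab by blast
        then show False
        proof cases
          case 1 show ?thesis by (rule key[of a1 a2 b1 b2 b3]) (use K abe 1 in \<open>auto simp: insert_commute\<close>)
        next
          case 2 show ?thesis by (rule key[of a1 a2 b2 b1 b3]) (use K abe 2 in \<open>auto simp: insert_commute\<close>)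
        next
          case 3 show ?thesis by (rule key[of a1 a2 b3 b1 b2]) (use K abe 3 in \<open>auto simp: insert_commute\<close>)
        next
          case 4 show ?thesis by (rule key[of a2 a1 b1 b2 b3]) (use K abe 4 in \<open>auto simp: insert_commute\<close>)
        next
          case 5 show ?thesis by (rule key[of a2 a1 b2 b1 b3]) (use K abe 5 in \<open>auto simp: insert_commute\<close>)
        next
          case 6 show ?thesis by (rule key[of a2 a1 b3 b1 b2]) (use K abe 6 in \<open>auto simp: insert_commute\<close>)
        qed
      qed
    qed
    then have "degree E w \<ge> 4" using mind wV by fastforce
    then show ?thesis by linarith
  qed
  have Vsplit: "V = insert \<alpha> ({x,y,z} \<union> R)" using QV R_def Q_def by auto
  have s1: "(\<Sum>v\<in>V. degree E v) = degree E \<alpha> + (\<Sum>v\<in>{x,y,z}. degree E v) + (\<Sum>v\<in>R. degree E v)"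
  proof -
    have "\<alpha> \<notin> {x,y,z} \<union> R" using alnot R_def Q_def by auto
    moreover have "{x,y,z} \<inter> R = {}" using R_def Q_def by auto
    moreover have "sum (degree E) ({x,y,z} \<union> R) = sum (degree E) {x,y,z} + sum (degree E) R"
      by (rule sum.union_disjoint) (use finR calculation in auto)
    moreover have "sum (degree E) (insert \<alpha> ({x,y,z} \<union> R)) = degree E \<alpha> + sum (degree E) ({x,y,z} \<union> R)"
      by (rule sum.insert) (use finR calculation in auto)
    ultimately show ?thesis using Vsplit by simp
  qed
  have s2: "(\<Sum>v\<in>{x,y,z}. 3 + card (neighbors E v \<inter> R)) \<le> (\<Sum>v\<in>{x,y,z}. degree E v)"
    by (rule sum_mono) (rule dx)
  have s3: "(\<Sum>v\<in>{x,y,z}. 3 + card (neighbors E v \<inter> R)) = 9 + (\<Sum>w\<in>R. card (neighbors E w \<inter> {x,y,z}))"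
    using dc xyz by (simp add: sum.distrib)
  have s4: "(\<Sum>w\<in>R. (4::nat)) \<le> (\<Sum>w\<in>R. degree E w + card (neighbors E w \<inter> {x,y,z}))"
    by (rule sum_mono) (rule dR)
  have s5: "(\<Sum>w\<in>R. degree E w + card (neighbors E w \<inter> {x,y,z})) = (\<Sum>w\<in>R. degree E w) + (\<Sum>w\<in>R. card (neighbors E w \<inter> {x,y,z}))"
    by (rule sum.distrib)
  have s6: "(\<Sum>w\<in>R. (4::nat)) = 4 * card R" by simp
  have "2 * card E \<ge> 12 + 4 * card R" using s1 s2 s3 s4 s5 s6 handshake[OF sg] al(2) by linarith
  moreover have "n \<ge> 4" using card_mono[OF finV QV] cQ assms(2) by linarith
  ultimately show ?thesis using cR by linarith
qed

end
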